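(* Let $k$ be an algebraically closed field of characteristic $0$ and $d\ge3$. For each integer $m\ge1$ let $V_m$ have basis $v_1,\dots,v_m$ with symmetric $d$-linear form $\Theta_d(v_{i_1},\dots,v_{i_d})=1$ if $i_1+\dots+i_d=(d-1)m+1$ and $0$ otherwise, let $\mathcal{L}(m,d)=\{L\in\mathfrak{gl}(V_m):\sum_{i=1}^d\Theta_d(u_1,\dots,L(u_i),\dots,u_d)=0\ \forall u_j\in V_m\}$, and let $D_m(v_i)=(m-1-d(m-i))v_i$. For $n\ge2$ let $\iota:V_n\to V_{n+1}$, $\iota(v_i)=v_i$, $\pi:V_{n+1}\to V_n$, $\pi(v_i)=v_{i-1}$ (with $v_0=0$), and $\rho(f)=\iota\circ f\circ\pi$. Then for every $n\ge2$, $\mathcal{L}(n+1,d)=\rho(\mathcal{L}(n,d))\oplus kD_{n+1}$ and $\dim_k\mathcal{L}(n,d)=n-1$. *)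

theory Defs
  imports "HOL-Computational_Algebra.Polynomial" "HOL-Library.FuncSet" "HOL-Library.Function_Algebras"
begin

text \<open>V_m is modelled as the functions nat => 'a supported on {1..m}
  (coordinates w.r.t. the basis v_1..v_m); gl(V_m) as m x m matrices
  nat => nat => 'a supported on {1..m} x {1..m} (column j = image of v_j).\<close>

definition Vm :: "nat \<Rightarrow> (nat \<Rightarrow> 'a::field) set" where
  "Vm m = {u. \<forall>i. i \<notin> {1..m} \<longrightarrow> u i = 0}"

definition glm :: "nat \<Rightarrow> (nat \<Rightarrow> nat \<Rightarrow> 'a::field) set" where
  "glm m = {M. \<forall>i j. (i \<notin> {1..m} \<or> j \<notin> {1..m}) \<longrightarrow> M i j = 0}"

definition mat_app :: "nat \<Rightarrow> (nat \<Rightarrow> nat \<Rightarrow> 'a::field) \<Rightarrow> (nat \<Rightarrow> 'a) \<Rightarrow> (nat \<Rightarrow> 'a)" where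
  "mat_app m M u = (\<lambda>i. \<Sum>j\<in>{1..m}. M i j * u j)"

definition mat_mul :: "nat \<Rightarrow> (nat \<Rightarrow> nat \<Rightarrow> 'a::field) \<Rightarrow> (nat \<Rightarrow> nat \<Rightarrow> 'a) \<Rightarrow> (nat \<Rightarrow> nat \<Rightarrow> 'a)" where
  "mat_mul m M N = (\<lambda>i j. \<Sum>k\<in>{1..m}. M i k * N k j)"

definition Theta :: "nat \<Rightarrow> nat \<Rightarrow> (nat \<Rightarrow> nat \<Rightarrow> 'a::field) \<Rightarrow> 'a" where
  "Theta d m us =
     (\<Sum>I \<in> {I \<in> PiE {..<d} (\<lambda>_. {1..m}). (\<Sum>j<d. I j) = (d - 1) * m + 1}.
        \<Prod>j<d. us j (I j))"

definition Lie :: "nat \<Rightarrow> nat \<Rightarrow> (nat \<Rightarrow> nat \<Rightarrow> 'a::field) set" where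
  "Lie m d = {L \<in> glm m. \<forall>us. (\<forall>j<d. us j \<in> Vm m) \<longrightarrow>
       (\<Sum>i<d. Theta d m (us(i := mat_app m L (us i)))) = 0}"

definition Dm :: "nat \<Rightarrow> nat \<Rightarrow> (nat \<Rightarrow> nat \<Rightarrow> 'a::field)" where
  "Dm m d = (\<lambda>i j. if i = j \<and> i \<in> {1..m}
                    then of_int (int m - 1 - int d * (int m - int i)) else 0)"

definition iota_mat :: "nat \<Rightarrow> (nat \<Rightarrow> nat \<Rightarrow> 'a::field)" where
  "iota_mat n = (\<lambda>i j. if i = j \<and> j \<in> {1..n} then 1 else 0)"

definition pi_mat :: "nat \<Rightarrow> (nat \<Rightarrow> nat \<Rightarrow> 'a::field)" where
  "pi_mat n = (\<lambda>i j. if j \<in> {2..n+1} \<and> i = j - 1 then 1 else 0)"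

definition rho :: "nat \<Rightarrow> (nat \<Rightarrow> nat \<Rightarrow> 'a::field) \<Rightarrow> (nat \<Rightarrow> nat \<Rightarrow> 'a)" where
  "rho n f = mat_mul n (iota_mat n) (mat_mul n f (pi_mat n))"

definition mscale :: "'a::field \<Rightarrow> (nat \<Rightarrow> nat \<Rightarrow> 'a) \<Rightarrow> (nat \<Rightarrow> nat \<Rightarrow> 'a)" where
  "mscale c M = (\<lambda>i j. c * M i j)"

end

theory Submission
  imports Defs
begin



lemma sum_fun_apply2: "finite B \<Longrightarrow> (sum F B :: nat \<Rightarrow> nat \<Rightarrow> 'a::comm_monoid_add) i j = (\<Sum>y\<in>B. F y i j)"
  by (induction B rule: finite_induct) auto

lemma sum_upd_nat:
  fixes I :: "nat \<Rightarrow> nat"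
  assumes "i < d"
  shows "sum (I(i:=l)) {..<d} + I i = sum I {..<d} + l"
proof -
  have a: "sum (I(i:=l)) {..<d} = l + sum (I(i:=l)) ({..<d} - {i})"
    using assms by (subst sum.remove[of _ i]) auto
  have b: "sum I {..<d} = I i + sum I ({..<d} - {i})"
    using assms by (subst sum.remove[of _ i]) auto
  have c: "sum (I(i:=l)) ({..<d} - {i}) = sum I ({..<d} - {i})"
    by (rule sum.cong) auto
  show ?thesis using a b c by simp
qed

lemma L_row_sum:
  fixes L :: "nat \<Rightarrow> nat \<Rightarrow> 'a::field"
  assumes L: "L \<in> glm m"
  shows "L (q + S - T) r = (\<Sum>p\<in>{1..m}. (if T + p = S + q then L p r else 0))"
proof (cases "T \<le> q + S")
  case True
  define p0 where "p0 = q + S - T"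
  have "(\<Sum>p\<in>{1..m}. (if T + p = S + q then L p r else 0)) = (\<Sum>p\<in>{1..m}. (if p = p0 then L p r else 0))"
    using True by (intro sum.cong) (auto simp: p0_def)
  also have "\<dots> = (if p0 \<in> {1..m} then L p0 r else 0)"
    by (simp add: sum.delta)
  also have "\<dots> = L p0 r" using L unfolding glm_def by auto
  finally show ?thesis by (simp add: p0_def)
next
  case False
  have "(\<Sum>p\<in>{1..m}. (if T + p = S + q then L p r else 0)) = 0"
    using False by (intro sum.neutral) auto
  moreover have "q + S - T = 0" using False by simp
  moreover have "L 0 r = 0" using L unfolding glm_def by auto
  ultimately show ?thesis by simp
qed

lemma theta_update:
  fixes L :: "nat \<Rightarrow> nat \<Rightarrow> 'a::field"
  assumes L: "L \<in> glm m" and i: "i < d"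
  shows "Theta d m (us(i := mat_app m L (us i))) =
    (\<Sum>J\<in>PiE {..<d} (\<lambda>_. {1..m}). (\<Prod>j<d. us j (J j)) * L (J i + ((d-1)*m+1) - sum J {..<d}) (J i))"
proof -
  define A where "A = PiE {..<d} (\<lambda>_::nat. {1..m::nat})"
  define S where "S = (d-1)*m+1"
  define P where "P = (\<lambda>I::nat\<Rightarrow>nat. \<Prod>j\<in>{..<d}-{i}. us j (I j))"
  have finA: "finite A" unfolding A_def by (intro finite_PiE) auto
  have prodsplit: "(\<Prod>j<d. F j (I j)) = F i (I i) * (\<Prod>j\<in>{..<d}-{i}. F j (I j))" for F and I :: "nat \<Rightarrow> nat"
    using i by (subst prod.remove[of _ i]) auto
  have "Theta d m (us(i := mat_app m L (us i))) =
     (\<Sum>I\<in>A. if sum I {..<d} = S then (\<Prod>j<d. (us(i := mat_app m L (us i))) j (I j)) else 0)"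
    unfolding Theta_def A_def S_def by (subst sum.inter_filter) (auto intro: finite_PiE)
  also have "\<dots> = (\<Sum>I\<in>A. \<Sum>l\<in>{1..m}. if sum I {..<d} = S then L (I i) l * us i l * P I else 0)"
  proof (rule sum.cong[OF refl])
    fix I assume "I \<in> A"
    have "(\<Prod>j<d. (us(i := mat_app m L (us i))) j (I j)) = mat_app m L (us i) (I i) * P I"
      unfolding P_def by (subst prodsplit) (auto intro!: prod.cong)
    also have "\<dots> = (\<Sum>l\<in>{1..m}. L (I i) l * us i l * P I)"
      unfolding mat_app_def by (simp add: sum_distrib_right)
    finally show "(if sum I {..<d} = S then (\<Prod>j<d. (us(i := mat_app m L (us i))) j (I j)) else 0) =
        (\<Sum>l\<in>{1..m}. if sum I {..<d} = S then L (I i) l * us i l * P I else 0)"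
      by simp
  qed
  also have "\<dots> = (\<Sum>(I,l)\<in>A\<times>{1..m}. if sum I {..<d} = S then L (I i) l * us i l * P I else 0)"
    by (rule sum.cartesian_product)
  also have "\<dots> = (\<Sum>(J,p)\<in>A\<times>{1..m}. if sum J {..<d} + p = S + J i then L p (J i) * us i (J i) * P J else 0)"
  proof (rule sum.reindex_bij_witness[where i = "\<lambda>(J,p). (J(i:=p), J i)" and j = "\<lambda>(I,l). (I(i:=l), I i)"])
    fix a assume "a \<in> A \<times> {1..m}"
    then show "(case case a of (I, l) \<Rightarrow> (I(i := l), I i) of (J, p) \<Rightarrow> (J(i := p), J i)) = a"
      by (cases a) auto
  next
    fix a assume "a \<in> A \<times> {1..m}"
    then show "(case a of (I, l) \<Rightarrow> (I(i := l), I i)) \<in> A \<times> {1..m}"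
      using i by (cases a) (auto simp: A_def PiE_iff extensional_def)
  next
    fix a assume "a \<in> A \<times> {1..m}"
    then show "(case case a of (J, p) \<Rightarrow> (J(i := p), J i) of (I, l) \<Rightarrow> (I(i := l), I i)) = a"
      by (cases a) auto
  next
    fix a assume "a \<in> A \<times> {1..m}"
    then show "(case a of (J, p) \<Rightarrow> (J(i := p), J i)) \<in> A \<times> {1..m}"
      using i by (cases a) (auto simp: A_def PiE_iff extensional_def)
  next
    fix a assume "a \<in> A \<times> {1..m}"
    obtain I l where a: "a = (I, l)" by (cases a)
    have PI: "P (I(i:=l)) = P I" unfolding P_def by (intro prod.cong) auto
    have "sum (I(i:=l)) {..<d} + I i = sum I {..<d} + l" by (rule sum_upd_nat[OF i])
    then have "(sum (I(i:=l)) {..<d} + I i = S + l) = (sum I {..<d} = S)" by arith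
    then show "(case case a of (I, l) \<Rightarrow> (I(i := l), I i) of
          (J, p) \<Rightarrow> if sum J {..<d} + p = S + J i then L p (J i) * us i (J i) * P J else 0) =
         (case a of (I, l) \<Rightarrow> if sum I {..<d} = S then L (I i) l * us i l * P I else 0)"
      using a PI by simp
  qed
  also have "\<dots> = (\<Sum>J\<in>A. \<Sum>p\<in>{1..m}. if sum J {..<d} + p = S + J i then L p (J i) * us i (J i) * P J else 0)"
    by (rule sum.cartesian_product[symmetric])
  also have "\<dots> = (\<Sum>J\<in>A. (\<Prod>j<d. us j (J j)) * L (J i + S - sum J {..<d}) (J i))"
  proof (rule sum.cong[OF refl])
    fix J assume "J \<in> A"
    have "(\<Prod>j<d. us j (J j)) * L (J i + S - sum J {..<d}) (J i)
       = us i (J i) * P J * (\<Sum>p\<in>{1..m}. (if sum J {..<d} + p = S + J i then L p (J i) else 0))"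
      unfolding P_def by (subst prodsplit, subst L_row_sum[OF L]) simp
    also have "\<dots> = (\<Sum>p\<in>{1..m}. if sum J {..<d} + p = S + J i then L p (J i) * us i (J i) * P J else 0)"
      by (simp add: sum_distrib_left if_distrib mult_ac cong: if_cong)
    finally show "(\<Sum>p\<in>{1..m}. if sum J {..<d} + p = S + J i then L p (J i) * us i (J i) * P J else 0) =
        (\<Prod>j<d. us j (J j)) * L (J i + S - sum J {..<d}) (J i)" by simp
  qed
  finally show ?thesis unfolding A_def S_def .
qed

lemma Lie_sum_expand:
  fixes L :: "nat \<Rightarrow> nat \<Rightarrow> 'a::field"
  assumes L: "L \<in> glm m"
  shows "(\<Sum>i<d. Theta d m (us(i := mat_app m L (us i)))) =
    (\<Sum>J\<in>PiE {..<d} (\<lambda>_. {1..m}). (\<Prod>j<d. us j (J j)) * (\<Sum>i<d. L (J i + ((d-1)*m+1) - sum J {..<d}) (J i)))"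
proof -
  have "(\<Sum>i<d. Theta d m (us(i := mat_app m L (us i)))) =
    (\<Sum>i<d. \<Sum>J\<in>PiE {..<d} (\<lambda>_. {1..m}). (\<Prod>j<d. us j (J j)) * L (J i + ((d-1)*m+1) - sum J {..<d}) (J i))"
    by (intro sum.cong refl theta_update[OF L]) auto
  also have "\<dots> = (\<Sum>J\<in>PiE {..<d} (\<lambda>_. {1..m}). \<Sum>i<d. (\<Prod>j<d. us j (J j)) * L (J i + ((d-1)*m+1) - sum J {..<d}) (J i))"
    by (rule sum.swap)
  also have "\<dots> = (\<Sum>J\<in>PiE {..<d} (\<lambda>_. {1..m}). (\<Prod>j<d. us j (J j)) * (\<Sum>i<d. L (J i + ((d-1)*m+1) - sum J {..<d}) (J i)))"
    by (simp only: sum_distrib_left)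
  finally show ?thesis .
qed

lemma Lie_iff:
  fixes L :: "nat \<Rightarrow> nat \<Rightarrow> 'a::field"
  shows "L \<in> Lie m d \<longleftrightarrow> L \<in> glm m \<and> (\<forall>J\<in>PiE {..<d} (\<lambda>_. {1..m}).
       (\<Sum>i<d. L (J i + ((d-1)*m+1) - sum J {..<d}) (J i)) = 0)"
proof
  assume H: "L \<in> glm m \<and> (\<forall>J\<in>PiE {..<d} (\<lambda>_. {1..m}). (\<Sum>i<d. L (J i + ((d-1)*m+1) - sum J {..<d}) (J i)) = 0)"
  have Z: "(\<Sum>i<d. Theta d m (us(i := mat_app m L (us i)))) = 0" for us
  proof -
    have "(\<Sum>i<d. Theta d m (us(i := mat_app m L (us i)))) =
      (\<Sum>J\<in>PiE {..<d} (\<lambda>_. {1..m}). (\<Prod>j<d. us j (J j)) * (\<Sum>i<d. L (J i + ((d-1)*m+1) - sum J {..<d}) (J i)))"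
      using H by (intro Lie_sum_expand) blast
    also have "\<dots> = (\<Sum>J\<in>PiE {..<d} (\<lambda>_. {1..m}). 0)"
    proof (rule sum.cong[OF refl])
      fix J assume "J \<in> PiE {..<d} (\<lambda>_. {1..m})"
      then have "(\<Sum>i<d. L (J i + ((d-1)*m+1) - sum J {..<d}) (J i)) = 0" using H by blast
      then show "(\<Prod>j<d. us j (J j)) * (\<Sum>i<d. L (J i + ((d-1)*m+1) - sum J {..<d}) (J i)) = 0" by (simp only: mult_zero_right)
    qed
    also have "\<dots> = 0" by (rule sum.neutral) blast
    finally show ?thesis .
  qed
  then show "L \<in> Lie m d"
    using H unfolding Lie_def mem_Collect_eq by blast
next
  assume H: "L \<in> Lie m d"
  then have L: "L \<in> glm m" unfolding Lie_def by blast
  define A where "A = PiE {..<d} (\<lambda>_::nat. {1..m::nat})"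
  define c where "c = (\<lambda>J::nat\<Rightarrow>nat. (\<Sum>i<d. L (J i + ((d-1)*m+1) - sum J {..<d}) (J i)))"
  have finA: "finite A" unfolding A_def by (intro finite_PiE) auto
  have "c J0 = 0" if J0: "J0 \<in> A" for J0
  proof -
    define us where "us = (\<lambda>j k. if k = J0 j then (1::'a) else 0)"
    have usV: "\<forall>j<d. us j \<in> Vm m"
      using J0 unfolding us_def Vm_def A_def by (auto simp: PiE_iff)
    have "\<forall>us. (\<forall>j<d. us j \<in> Vm m) \<longrightarrow> (\<Sum>i<d. Theta d m (us(i := mat_app m L (us i)))) = (0::'a)"
      using H unfolding Lie_def by blast
    then have "(\<Sum>i<d. Theta d m (us(i := mat_app m L (us i)))) = 0"
      using usV by blast
    then have S0: "(\<Sum>J\<in>A. (\<Prod>j<d. us j (J j)) * c J) = 0"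
      unfolding A_def c_def Lie_sum_expand[OF L] .
    have PJ: "(\<Prod>j<d. us j (J j)) * c J = (if J = J0 then c J else 0)" if J: "J \<in> A" for J
    proof (cases "J = J0")
      case True then show ?thesis unfolding us_def by simp
    next
      case False
      then obtain k where "k < d" "J k \<noteq> J0 k"
        using J J0 unfolding A_def by (metis PiE_ext lessThan_iff)
      then have "(\<Prod>j<d. us j (J j)) = 0" unfolding us_def
        by (intro prod_zero) auto
      then show ?thesis using False by simp
    qed
    have S2: "(\<Sum>J\<in>A. (if J = J0 then c J else 0)) = (\<Sum>J\<in>A. (\<Prod>j<d. us j (J j)) * c J)"
      by (intro sum.cong refl) (simp only: PJ)
    have "(\<Sum>J\<in>A. (if J = J0 then c J else 0)) = 0"
      using S2 S0 by (rule trans)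
    moreover have "(\<Sum>J\<in>A. (if J = J0 then c J else 0)) = c J0"
      using J0 finA by (simp add: sum.delta')
    ultimately show ?thesis by simp
  qed
  then show "L \<in> glm m \<and> (\<forall>J\<in>PiE {..<d} (\<lambda>_. {1..m}). (\<Sum>i<d. L (J i + ((d-1)*m+1) - sum J {..<d}) (J i)) = 0)"
    using L unfolding A_def c_def by blast
qed

definition Gt :: "nat \<Rightarrow> (nat \<Rightarrow> nat \<Rightarrow> 'a::field) \<Rightarrow> int \<Rightarrow> nat \<Rightarrow> 'a" where
  "Gt m L t q = (if 1 \<le> int q + t \<and> int q + t \<le> int m then L (nat (int q + t)) q else 0)"

lemma sum_split3:
  fixes d :: nat
  assumes "3 \<le> d"
  shows "(\<Sum>k<d. g k) = g 0 + g 1 + g 2 + (\<Sum>k\<in>{3..<d}. g k)"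
proof -
  have "{..<d} = insert 0 (insert 1 (insert 2 {3..<d}))" using assms by auto
  then show ?thesis by (simp add: add.assoc)
qed

lemma glm_row:
  fixes L :: "nat \<Rightarrow> nat \<Rightarrow> 'a::field"
  assumes L: "L \<in> glm m" and t: "int S - int T = t"
  shows "L (q + S - T) q = Gt m L t q"
proof (cases "T \<le> q + S")
  case True
  define p where "p = q + S - T"
  have ip: "int q + t = int p" using t True unfolding p_def by simp
  have "Gt m L t q = (if 1 \<le> p \<and> p \<le> m then L p q else 0)"
    unfolding Gt_def ip by simp
  moreover have "L p q = 0" if "\<not> (1 \<le> p \<and> p \<le> m)" using L that unfolding glm_def by auto
  ultimately show ?thesis unfolding p_def[symmetric] by auto
next
  case False
  then show ?thesis using L t unfolding Gt_def glm_def by auto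
qed

lemma REL:
  fixes L :: "nat \<Rightarrow> nat \<Rightarrow> 'a::field"
  assumes L: "L \<in> Lie m d" and d: "3 \<le> d"
    and x: "x \<in> {1..m}" and y: "y \<in> {1..m}" and z: "z \<in> {1..m}"
    and t: "int x + int y + int z + t = 2 * int m + 1"
  shows "Gt m L t x + Gt m L t y + Gt m L t z + of_nat (d-3) * Gt m L t m = 0"
proof -
  have Lg: "L \<in> glm m" using L unfolding Lie_def by auto
  define J where "J = (\<lambda>k::nat. if k < d then (if k = 0 then x else if k = 1 then y else if k = 2 then z else m) else undefined)"
  have m1: "1 \<le> m" using x by auto
  have JA: "J \<in> PiE {..<d} (\<lambda>_. {1..m})"
    using x y z m1 unfolding J_def by (auto simp: PiE_iff extensional_def)
  have sJ: "sum J {..<d} = x + y + z + (d-3)*m"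
    using d by (subst sum_split3[OF d]) (simp add: J_def)
  obtain r where r: "d = 3 + r" using d le_iff_add by blast
  have tt: "int ((d-1)*m+1) - int (sum J {..<d}) = t"
  proof -
    have s2: "sum J {..<d} = x+y+z+r*m" using sJ r by simp
    have "(d-1)*m+1 = 2*m + r*m + 1" using r by (simp add: algebra_simps)
    then show ?thesis using t s2 by simp
  qed
  have "(\<Sum>i<d. L (J i + ((d-1)*m+1) - sum J {..<d}) (J i)) = 0"
    using JA L unfolding Lie_iff by auto
  also have "(\<Sum>i<d. L (J i + ((d-1)*m+1) - sum J {..<d}) (J i)) = (\<Sum>i<d. Gt m L t (J i))"
    by (intro sum.cong refl glm_row[OF Lg tt])
  also have "\<dots> = Gt m L t x + Gt m L t y + Gt m L t z + of_nat (d-3) * Gt m L t m"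
    using d by (subst sum_split3[OF d]) (simp add: J_def)
  finally show ?thesis by simp
qed



locale relG =
  fixes G :: "nat \<Rightarrow> 'a::field_char_0" and m d :: nat and t :: int
  assumes R: "\<And>x y z. x\<in>{1..m} \<Longrightarrow> y\<in>{1..m} \<Longrightarrow> z\<in>{1..m} \<Longrightarrow>
      int x + int y + int z + t = 2*int m + 1 \<Longrightarrow> G x + G y + G z + of_nat(d-3) * G m = 0"
  and d3: "3 \<le> d" and m2: "2 \<le> m"
begin

lemma stepA:
  assumes x: "1 \<le> x" "x \<le> m - 1" and y: "y\<in>{1..m}" and e: "int x + int y + t = int m + 1"
  shows "G (x+1) - G x = G m - G (m-1)"
proof -
  have 1: "G x + G y + G m + of_nat(d-3) * G m = 0"
    using x y e m2 by (intro R) auto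
  have 2: "G (x+1) + G y + G (m-1) + of_nat(d-3) * G m = 0"
    using x y e m2 by (intro R) auto
  have "G (x+1) - G x = (G (x+1) + G y + G (m-1) + of_nat(d-3) * G m) - (G x + G y + G m + of_nat(d-3) * G m) + (G m - G (m-1))"
    by (simp add: algebra_simps)
  then show ?thesis unfolding 1 2 by simp
qed

lemma stepB:
  assumes x: "x\<in>{1..m}" and y: "y\<in>{1..m}" and e: "int x + int y + t = int m + 1"
  shows "G x + G y + of_nat(d-2) * G m = 0"
proof -
  have 1: "G x + G y + G m + of_nat(d-3) * G m = 0"
    using x y e m2 by (intro R) auto
  have "of_nat (d-2) = (1::'a) + of_nat(d-3)" using d3
    by (metis Suc_diff_le diff_Suc_Suc numeral_3_eq_3 numeral_2_eq_2 of_nat_Suc)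
  then show ?thesis using 1 by (simp add: algebra_simps)
qed

lemma lower:
  fixes \<tau> :: nat
  assumes tt: "t = int \<tau>" and tau: "1 \<le> \<tau>"
    and Z: "\<And>q. m < q + \<tau> \<Longrightarrow> G q = 0"
    and q: "1 \<le> q" "q + \<tau> \<le> m"
  shows "G q = 0"
proof -
  define hi where "hi = m + 1 - \<tau>"
  define \<gamma> where "\<gamma> = G (m-1)"
  have taum: "\<tau> \<le> m - 1" using q by simp
  have Gm: "G m = 0" using Z tau by simp
  have Ghi: "G hi = 0" using Z taum unfolding hi_def by simp
  have st: "G x = G (x+1) + \<gamma>" if "1 \<le> x" "x + \<tau> \<le> m" for x
  proof -
    have "G (x+1) - G x = G m - G (m-1)"
      using that tt tau by (intro stepA[where y = "m + 1 - \<tau> - x"]) auto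
    then show ?thesis unfolding \<gamma>_def Gm by (simp add: algebra_simps)
  qed
  have ind: "k \<le> hi - 1 \<Longrightarrow> G (hi - k) = of_nat k * \<gamma>" for k
  proof (induction k)
    case 0 then show ?case using Ghi by simp
  next
    case (Suc k)
    have "G (hi - Suc k) = G (hi - Suc k + 1) + \<gamma>"
      using Suc.prems taum unfolding hi_def by (intro st) auto
    also have "hi - Suc k + 1 = hi - k" using Suc.prems by simp
    finally show ?case using Suc by (simp add: algebra_simps)
  qed
  have B: "G 1 + G (m-\<tau>) + of_nat(d-2) * G m = 0"
    using taum tau tt by (intro stepB) auto
  have G1: "G 1 = of_nat (m-\<tau>) * \<gamma>" using ind[of "hi - 1"] taum unfolding hi_def by simp
  have mt1: "1 \<le> m - \<tau>" using taum m2 by arith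
  have G2: "G (m-\<tau>) = \<gamma>" using ind[of 1] mt1 unfolding hi_def by simp
  have "of_nat (m - \<tau> + 1) * \<gamma> = 0" using B G1 G2 Gm by (simp add: algebra_simps)
  then have g0: "\<gamma> = 0" by (simp del: of_nat_Suc)
  have "G (hi - (hi - q)) = of_nat (hi - q) * \<gamma>" using q by (intro ind) (simp add: hi_def)
  moreover have "hi - (hi - q) = q" using q unfolding hi_def by simp
  ultimately show ?thesis using g0 by simp
qed

lemma upper:
  fixes s :: nat
  assumes tt: "t = - int s" and sm: "s \<le> m - 1"
    and q: "1 + s \<le> q" "q \<le> m"
  shows "G q = (G m - G (m-1)) / of_nat d * of_int (int q - int s + (int d - 1) * (int q - int m) - 1)"
proof -
  define \<delta> where "\<delta> = G m - G (m-1)"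
  have st: "G x = G (x+1) - \<delta>" if "1 + s \<le> x" "x \<le> m - 1" for x
  proof -
    have "G (x+1) - G x = G m - G (m-1)"
      using that tt sm by (intro stepA[where y = "m + 1 + s - x"]) auto
    then show ?thesis unfolding \<delta>_def by (simp add: algebra_simps)
  qed
  have ind: "k \<le> m - 1 - s \<Longrightarrow> G (m - k) = G m - of_nat k * \<delta>" for k
  proof (induction k)
    case 0 then show ?case by simp
  next
    case (Suc k)
    have "G (m - Suc k) = G (m - Suc k + 1) - \<delta>"
      using Suc.prems by (intro st) auto
    also have "m - Suc k + 1 = m - k" using Suc.prems by simp
    finally show ?case using Suc by (simp add: algebra_simps)
  qed
  have B: "G (1+s) + G m + of_nat(d-2) * G m = 0"
    using sm tt m2 by (intro stepB) auto
  have G1: "G (1+s) = G m - of_nat (m-1-s) * \<delta>"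
  proof -
    have "m - (m-1-s) = 1 + s" using sm m2 by arith
    then show ?thesis using ind[of "m-1-s"] by simp
  qed
  have Gq: "G q = G m - of_nat (m-q) * \<delta>"
    using ind[of "m-q"] q by simp
  have "of_nat (d-2) = (of_nat d - 2 :: 'a)" using d3 by (simp add: of_nat_diff)
  have B': "G (1+s) = - (G m + of_nat(d-2) * G m)" using B by (simp only: add.assoc eq_neg_iff_add_eq_0)
  have "of_nat d * G m = (2 + of_nat (d-2)) * G m" using \<open>of_nat (d-2) = (of_nat d - 2 :: 'a)\<close> by simp
  also have "\<dots> = G m - G (1+s)" using B' by (simp add: algebra_simps)
  also have "\<dots> = of_nat (m-1-s) * \<delta>" using G1 by simp
  finally have dGm: "of_nat d * G m = of_nat (m-1-s) * \<delta>" .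
  have c1: "(of_nat (m-1-s) :: 'a) = of_int (int m - 1 - int s)" using sm m2 by (simp add: of_nat_diff)
  have c2: "(of_nat (m-q) :: 'a) = of_int (int m - int q)" using q by (simp add: of_nat_diff)
  have dnz: "(of_nat d :: 'a) \<noteq> 0" using d3 by simp
  have "of_nat d * G q = of_nat d * G m - of_nat d * of_nat(m-q) * \<delta>" unfolding Gq by (simp add: right_diff_distrib mult.assoc)
  also have "\<dots> = of_nat(m-1-s)*\<delta> - of_nat d * of_nat(m-q) * \<delta>" using dGm by simp
  also have "\<dots> = of_int (int m - 1 - int s) * \<delta> - of_int (int d) * of_int (int m - int q) * \<delta>"
    unfolding c1 c2 by simp
  also have "\<dots> = \<delta> * of_int (int q - int s + (int d - 1) * (int q - int m) - 1)"
    by (simp add: algebra_simps)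
  finally have "of_nat d * G q = \<delta> * of_int (int q - int s + (int d - 1) * (int q - int m) - 1)" .
  then show ?thesis unfolding \<delta>_def[symmetric] using dnz by (simp add: field_simps)
qed

end



definition Emat :: "nat \<Rightarrow> nat \<Rightarrow> (nat \<Rightarrow> 'a::field) \<Rightarrow> nat \<Rightarrow> nat \<Rightarrow> 'a" where
  "Emat m d f = (\<lambda>i j. if 1 \<le> i \<and> i \<le> j \<and> j \<le> m
      then f (j - i) * of_int (int i + (int d - 1) * (int j - int m) - 1) else 0)"

lemma Lie_sub_Emat:
  fixes L :: "nat \<Rightarrow> nat \<Rightarrow> 'a::field_char_0"
  assumes L: "L \<in> Lie m d" and d: "3 \<le> d" and m: "2 \<le> m"
  shows "L \<in> range (Emat m d)"
proof -
  have Lg: "L \<in> glm m" using L unfolding Lie_def by auto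
  have rg: "relG (Gt m L t) m d t" for t
    by (unfold_locales) (use REL[OF L d] d m in auto)
  define f where "f = (\<lambda>s. (Gt m L (- int s) m - Gt m L (- int s) (m-1)) / of_nat d)"
  have "L = Emat m d f"
  proof (intro ext)
    fix i j
    show "L i j = Emat m d f i j"
    proof (cases "i \<in> {1..m} \<and> j \<in> {1..m}")
      case False
      then have "L i j = 0" using Lg unfolding glm_def by auto
      moreover have "Emat m d f i j = 0" using False unfolding Emat_def by auto
      ultimately show ?thesis by simp
    next
      case True
      show ?thesis
      proof (cases "j < i")
        case lt: True
        have "Gt m L (int (i - j)) j = 0"
          by (rule relG.lower[OF rg, of _ "i - j"]) (use True lt in \<open>auto simp: Gt_def\<close>)
        moreover have "Gt m L (int (i - j)) j = L i j" using True lt unfolding Gt_def by auto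
        moreover have "Emat m d f i j = 0" using lt unfolding Emat_def by auto
        ultimately show ?thesis by simp
      next
        case ge: False
        have "Gt m L (- int (j - i)) j = (Gt m L (- int (j - i)) m - Gt m L (- int (j - i)) (m-1)) / of_nat d
            * of_int (int j - int (j - i) + (int d - 1) * (int j - int m) - 1)"
          by (rule relG.upper[OF rg]) (use True ge in auto)
        moreover have "Gt m L (- int (j - i)) j = L i j"
        proof -
          have "int j + - int (j - i) = int i" using ge by simp
          then show ?thesis using True unfolding Gt_def by simp
        qed
        moreover have "int j - int (j - i) = int i" using ge by simp
        moreover have "Emat m d f i j = f (j - i) * of_int (int i + (int d - 1) * (int j - int m) - 1)"
          unfolding Emat_def using True ge by (intro if_P) auto
        ultimately show ?thesis unfolding f_def by simp
      qed
    qed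
  qed
  then show ?thesis by blast
qed

lemma Emat_glm: "Emat m d f \<in> glm m"
  unfolding Emat_def glm_def by auto

lemma Emat_in_Lie:
  fixes f :: "nat \<Rightarrow> 'a::field_char_0"
  assumes d: "3 \<le> d"
  shows "Emat m d f \<in> Lie m d"
  unfolding Lie_iff
proof (intro conjI Emat_glm ballI)
  fix J assume J: "J \<in> PiE {..<d} (\<lambda>_. {1..m})"
  define S where "S = (d-1)*m+1"
  define T where "T = sum J {..<d}"
  have Jr: "k < d \<Longrightarrow> J k \<in> {1..m}" for k using J by (auto simp: PiE_iff)
  show "(\<Sum>i<d. Emat m d f (J i + ((d-1)*m+1) - sum J {..<d}) (J i)) = 0"
  proof (cases "S \<le> T")
    case False
    have "Emat m d f (J i + S - T) (J i) = 0" for i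
      using False unfolding Emat_def by auto
    then show ?thesis unfolding S_def[symmetric] T_def[symmetric] by simp
  next
    case True
    have bound: "T \<le> J i + (d-1)*m" if i: "i < d" for i
    proof -
      have "T = J i + sum J ({..<d} - {i})" unfolding T_def using i by (subst sum.remove[of _ i]) auto
      moreover have "sum J ({..<d} - {i}) \<le> card ({..<d} - {i}) * m"
        using sum_bounded_above[of "{..<d}-{i}" J m] Jr by auto
      moreover have "card ({..<d} - {i}) = d - 1" using i by simp
      ultimately show ?thesis by simp
    qed
    have each: "Emat m d f (J i + S - T) (J i) = f (T - S) * of_int (int d * int (J i) - int T)" if i: "i < d" for i
    proof -
      have b: "T \<le> J i + (d-1)*m" by (rule bound[OF i])
      have r: "J i \<in> {1..m}" by (rule Jr[OF i])
      have "T \<le> J i + S" using b unfolding S_def by simp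
      then have eq: "int (J i + S - T) = int (J i) + int S - int T" by simp
      have Si: "int S = (int d - 1) * int m + 1" unfolding S_def using d by (simp add: of_nat_diff)
      have e1: "int (J i + S - T) + (int d - 1) * (int (J i) - int m) - 1 = int d * int (J i) - int T"
        unfolding eq Si by (simp add: algebra_simps)
      have c1: "1 \<le> J i + S - T" using b unfolding S_def by simp
      have c2: "J i + S - T \<le> J i" using True by simp
      have c3: "J i - (J i + S - T) = T - S" using True b unfolding S_def by simp
      have "Emat m d f (J i + S - T) (J i) = f (J i - (J i + S - T)) * of_int (int (J i + S - T) + (int d - 1) * (int (J i) - int m) - 1)"
        unfolding Emat_def using c1 c2 r by (intro if_P) auto
      then show ?thesis unfolding e1 c3 .
    qed
    have "(\<Sum>i<d. Emat m d f (J i + S - T) (J i)) = (\<Sum>i<d. f (T - S) * of_int (int d * int (J i) - int T))"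
      by (intro sum.cong refl each) auto
    also have "\<dots> = f (T - S) * of_int (\<Sum>i<d. int d * int (J i) - int T)"
      by (simp only: of_int_sum sum_distrib_left)
    also have "(\<Sum>i<d. int d * int (J i) - int T) = int d * (\<Sum>i<d. int (J i)) - of_nat d * int T"
      by (simp only: sum_subtractf sum_distrib_left sum_constant card_lessThan)
    also have "(\<Sum>i<d. int (J i)) = int T" unfolding T_def by (simp only: of_nat_sum)
    finally have "(\<Sum>i<d. Emat m d f (J i + S - T) (J i)) = 0" by simp
    then show ?thesis unfolding S_def T_def .
  qed
qed

lemma Lie_char:
  assumes d: "3 \<le> d" and m: "2 \<le> m"
  shows "(Lie m d :: (nat \<Rightarrow> nat \<Rightarrow> 'a::field_char_0) set) = range (Emat m d)"
  using Lie_sub_Emat[OF _ d m] Emat_in_Lie[OF d] by blast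



lemma rho_explicit:
  fixes A :: "nat \<Rightarrow> nat \<Rightarrow> 'a::field"
  shows "rho n A = (\<lambda>i j. if i \<in> {1..n} \<and> j \<in> {2..n+1} then A i (j-1) else 0)"
proof (intro ext)
  fix i j
  have inner: "mat_mul n A (pi_mat n) k j = (if j \<in> {2..n+1} then A k (j-1) else 0)" for k
  proof (cases "j \<in> {2..n+1}")
    case True
    have "mat_mul n A (pi_mat n) k j = (\<Sum>l\<in>{1..n}. if l = j - 1 then A k l else 0)"
      unfolding mat_mul_def pi_mat_def using True by (intro sum.cong refl) auto
    also have "\<dots> = A k (j-1)"
    proof -
      have "j - 1 \<in> {1..n}" using True by auto
      then show ?thesis by (simp add: sum.delta')
    qed
    finally show ?thesis using True by simp
  next
    case False
    have "mat_mul n A (pi_mat n) k j = 0"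
      unfolding mat_mul_def pi_mat_def using False by (intro sum.neutral) auto
    then show ?thesis unfolding if_not_P[OF False] .
  qed
  have "rho n A i j = (\<Sum>k\<in>{1..n}. if k = i then mat_mul n A (pi_mat n) k j else 0)"
    unfolding rho_def mat_mul_def[of n "iota_mat n"] by (intro sum.cong refl) (auto simp: iota_mat_def)
  also have "\<dots> = (if i \<in> {1..n} then mat_mul n A (pi_mat n) i j else 0)"
    by (simp add: sum.delta')
  finally show "rho n A i j = (if i \<in> {1..n} \<and> j \<in> {2..n+1} then A i (j-1) else 0)"
    using inner by simp
qed

lemma rho_Emat:
  fixes f :: "nat \<Rightarrow> 'a::field"
  shows "rho n (Emat n d f) = Emat (n+1) d (\<lambda>s. if s = 0 then 0 else f (s-1))"
proof (intro ext)
  fix i j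
  show "rho n (Emat n d f) i j = Emat (n+1) d (\<lambda>s. if s = 0 then 0 else f (s-1)) i j"
  proof (cases "1 \<le> i \<and> i < j \<and> j \<le> n + 1")
    case True
    have e: "int (j - 1) - int n = int j - int (n+1)" using True by simp
    have "rho n (Emat n d f) i j = Emat n d f i (j-1)" using True unfolding rho_explicit by simp
    also have "\<dots> = f (j - 1 - i) * of_int (int i + (int d - 1) * (int (j-1) - int n) - 1)"
      unfolding Emat_def using True by (intro if_P) auto
    also have "\<dots> = Emat (n+1) d (\<lambda>s. if s = 0 then 0 else f (s-1)) i j"
      unfolding Emat_def e using True by (simp add: diff_diff_add add.commute)
    finally show ?thesis .
  next
    case False
    then show ?thesis unfolding rho_explicit Emat_def by auto
  qed
qed

lemma Dm_Emat: "Dm m d = (Emat m d (\<lambda>s. if s = 0 then 1 else 0) :: nat \<Rightarrow> nat \<Rightarrow> 'a::field)"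
proof (intro ext)
  fix i j
  have e: "int m - 1 - int d * (int m - int i) = int i + (int d - 1) * (int i - int m) - 1"
    by (simp add: algebra_simps)
  show "Dm m d i j = (Emat m d (\<lambda>s. if s = 0 then 1 else 0) :: nat \<Rightarrow> nat \<Rightarrow> 'a) i j"
    unfolding Dm_def Emat_def e by auto
qed

lemma Emat_add:
  "(\<lambda>i j. Emat m d f i j + c * Emat m d g i j) = (Emat m d (\<lambda>s. f s + c * g s) :: nat \<Rightarrow> nat \<Rightarrow> 'a::field)"
  unfolding Emat_def by (intro ext) (simp add: algebra_simps)

lemma Emat_zero: "Emat m d (\<lambda>_. 0) = (\<lambda>i j. 0 :: 'a::field)"
  unfolding Emat_def by (intro ext) simp

theorem theorem3p11:
  fixes d n :: nat
  assumes "d \<ge> 3" and "n \<ge> 2"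
  shows "(Lie (n+1) d :: (nat \<Rightarrow> nat \<Rightarrow> 'a::{alg_closed_field, field_char_0}) set)
           = {(\<lambda>i j. A i j + c * Dm (n+1) d i j) | A c. A \<in> rho n ` Lie n d}
      \<and> rho n ` (Lie n d :: (nat \<Rightarrow> nat \<Rightarrow> 'a) set) \<inter> {mscale c (Dm (n+1) d) | c. True}
           = {(\<lambda>i j. 0)}
      \<and> vector_space.dim mscale (Lie n d :: (nat \<Rightarrow> nat \<Rightarrow> 'a) set) = n - 1"
proof (intro conjI)
  have d: "3 \<le> d" and n: "2 \<le> n" using assms by auto
  have LN: "(Lie n d :: (nat \<Rightarrow> nat \<Rightarrow> 'a) set) = range (Emat n d)" using Lie_char[OF d n] .
  have LN1: "(Lie (n+1) d :: (nat \<Rightarrow> nat \<Rightarrow> 'a) set) = range (Emat (n+1) d)" by (rule Lie_char[OF d]) (use n in simp)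
  show "(Lie (n+1) d :: (nat \<Rightarrow> nat \<Rightarrow> 'a) set)
           = {(\<lambda>i j. A i j + c * Dm (n+1) d i j) | A c. A \<in> rho n ` Lie n d}"
  proof (intro equalityI subsetI)
    fix x :: "nat \<Rightarrow> nat \<Rightarrow> 'a" assume "x \<in> Lie (n+1) d"
    then obtain f where x: "x = Emat (n+1) d f" using LN1 by auto
    define A where "A = rho n (Emat n d (\<lambda>s. f (s+1)))"
    have A: "A \<in> rho n ` Lie n d" unfolding A_def LN by auto
    have ff: "(\<lambda>s. (if s = 0 then 0 else f (s - 1 + 1)) + f 0 * (if s = 0 then 1 else 0)) = f"
      by (intro ext) auto
    have "(\<lambda>i j. A i j + f 0 * Dm (n+1) d i j) = x"
      unfolding A_def rho_Emat Dm_Emat Emat_add x ff ..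
    then show "x \<in> {(\<lambda>i j. A i j + c * Dm (n+1) d i j) | A c. A \<in> rho n ` Lie n d}"
      using A by blast
  next
    fix x :: "nat \<Rightarrow> nat \<Rightarrow> 'a" assume "x \<in> {(\<lambda>i j. A i j + c * Dm (n+1) d i j) | A c. A \<in> rho n ` Lie n d}"
    then obtain g c where x: "x = (\<lambda>i j. rho n (Emat n d g) i j + c * Dm (n+1) d i j)"
      unfolding LN by auto
    have "x = Emat (n+1) d (\<lambda>s. (if s = 0 then 0 else g (s - 1)) + c * (if s = 0 then 1 else 0))"
      unfolding x rho_Emat Dm_Emat Emat_add ..
    then show "x \<in> Lie (n+1) d" unfolding LN1 by blast
  qed
  show "rho n ` (Lie n d :: (nat \<Rightarrow> nat \<Rightarrow> 'a) set) \<inter> {mscale c (Dm (n+1) d) | c. True} = {(\<lambda>i j. 0)}"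
  proof (intro equalityI subsetI)
    fix x :: "nat \<Rightarrow> nat \<Rightarrow> 'a"
    assume "x \<in> rho n ` Lie n d \<inter> {mscale c (Dm (n+1) d) | c. True}"
    then have "x \<in> rho n ` range (Emat n d)" "\<exists>c. x = mscale c (Dm (n+1) d)" unfolding LN by auto
    then obtain g c where x1: "x = rho n (Emat n d g)" and x2: "x = mscale c (Dm (n+1) d)"
      by blast
    have "x 1 1 = 0" unfolding x1 rho_explicit by simp
    moreover have "x 1 1 = c * of_int (int (n+1) - 1 - int d * (int (n+1) - 1))"
      unfolding x2 mscale_def Dm_def by simp
    moreover have "int (n+1) - 1 - int d * (int (n+1) - 1) \<noteq> 0"
    proof -
      have "int (n+1) - 1 - int d * (int (n+1) - 1) = - (int n * (int d - 1))" by (simp add: algebra_simps)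
      moreover have "int n * (int d - 1) \<noteq> 0" using d n by simp
      ultimately show ?thesis by simp
    qed
    ultimately have "c = 0" by (simp del: of_int_diff of_int_mult)
    then show "x \<in> {(\<lambda>i j. 0)}" unfolding x2 mscale_def by simp
  next
    fix x :: "nat \<Rightarrow> nat \<Rightarrow> 'a" assume "x \<in> {(\<lambda>i j. 0)}"
    then have x: "x = (\<lambda>i j. 0)" by simp
    have "x = rho n (Emat n d (\<lambda>_. 0))"
    proof -
      have "(\<lambda>s. if s = 0 then 0 else (0::'a)) = (\<lambda>_. 0)" by auto
      then show ?thesis unfolding rho_Emat x by (simp add: Emat_zero)
    qed
    moreover have "x = mscale 0 (Dm (n+1) d)" unfolding x mscale_def by simp
    ultimately show "x \<in> rho n ` (Lie n d :: (nat \<Rightarrow> nat \<Rightarrow> 'a) set) \<inter> {mscale c (Dm (n+1) d) | c. True}"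
      unfolding LN by blast
  qed
  interpret vs: vector_space "mscale :: 'a \<Rightarrow> (nat \<Rightarrow> nat \<Rightarrow> 'a) \<Rightarrow> (nat \<Rightarrow> nat \<Rightarrow> 'a)"
    by unfold_locales (auto simp: mscale_def fun_eq_iff algebra_simps)
  define Eb where "Eb s = (Emat n d (\<lambda>r. if r = s then 1 else 0) :: nat \<Rightarrow> nat \<Rightarrow> 'a)" for s
  define B where "B = Eb ` {..<n-1}"
  have val: "Eb s 1 (1+s) \<noteq> 0" if s: "s < n - 1" for s
  proof -
    have "Eb s 1 (1+s) = of_int (1 + (int d - 1) * (int (1+s) - int n) - 1)"
    proof -
      have "1 + s \<le> n" using s by arith
      then show ?thesis unfolding Eb_def Emat_def by simp
    qed
    moreover have "1 + (int d - 1) * (int (1+s) - int n) - 1 \<noteq> 0" using s d by simp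
    ultimately show ?thesis by (simp only: of_int_eq_0_iff not_False_eq_True)
  qed
  have val0: "Eb s' 1 (1+s) = 0" if "s \<noteq> s'" for s s'
    unfolding Eb_def Emat_def using that by simp
  have inj: "inj_on Eb {..<n-1}"
  proof (rule inj_onI)
    fix s s' assume s: "s \<in> {..<n-1}" and "s' \<in> {..<n-1}" and e: "Eb s = Eb s'"
    show "s = s'"
    proof (rule ccontr)
      assume "s \<noteq> s'"
      then have "Eb s' 1 (1+s) = 0" by (rule val0)
      then have "Eb s 1 (1+s) = 0" using e by simp
      then show False using val s by simp
    qed
  qed
  have cardB: "card B = n - 1" unfolding B_def using inj by (simp add: card_image)
  have finB: "finite B" unfolding B_def by simp
  have BV: "B \<subseteq> Lie n d" unfolding B_def LN Eb_def by auto
  have VB: "Lie n d \<subseteq> vs.span B"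
  proof
    fix x :: "nat \<Rightarrow> nat \<Rightarrow> 'a" assume "x \<in> Lie n d"
    then obtain f where x: "x = Emat n d f" unfolding LN by auto
    have "x = (\<Sum>s<n-1. mscale (f s) (Eb s))"
    proof (intro ext)
      fix i j
      have "(\<Sum>s<n-1. mscale (f s) (Eb s)) i j = (\<Sum>s<n-1. f s * Eb s i j)"
        by (simp add: sum_fun_apply2 mscale_def)
      also have "\<dots> = x i j"
      proof (cases "1 \<le> i \<and> i \<le> j \<and> j \<le> n")
        case True
        have "(\<Sum>s<n-1. f s * Eb s i j) = (\<Sum>s<n-1. if s = j - i then f (j - i) * of_int (int i + (int d - 1) * (int j - int n) - 1) else 0)"
          unfolding Eb_def Emat_def using True by (intro sum.cong refl) auto
        also have "\<dots> = (if j - i < n - 1 then f (j - i) * of_int (int i + (int d - 1) * (int j - int n) - 1) else 0)"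
          by (simp add: sum.delta')
        also have "\<dots> = x i j"
        proof (cases "j - i < n - 1")
          case True2: True
          then show ?thesis unfolding x Emat_def using True by simp
        next
          case False
          then have "i = 1" "j = n" using True by auto
          then show ?thesis unfolding x Emat_def using False by simp
        qed
        finally show ?thesis .
      next
        case False
        have "Eb s i j = 0" for s using False unfolding Eb_def Emat_def by auto
        moreover have "x i j = 0" using False unfolding x Emat_def by auto
        ultimately show ?thesis by simp
      qed
      finally show "x i j = (\<Sum>s<n-1. mscale (f s) (Eb s)) i j" by simp
    qed
    moreover have "(\<Sum>s<n-1. mscale (f s) (Eb s)) \<in> vs.span B"
      by (intro vs.span_sum vs.span_scale vs.span_base) (auto simp: B_def)
    ultimately show "x \<in> vs.span B" by simp
  qed
  have indep: "vs.independent B"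
  proof (rule vs.independent_if_scalars_zero[OF finB])
    fix g x assume S: "(\<Sum>x\<in>B. mscale (g x) x) = 0" and xB: "x \<in> B"
    then obtain s0 where s0: "s0 < n - 1" and xe: "x = Eb s0" unfolding B_def by auto
    have "0 = (\<Sum>y\<in>B. mscale (g y) y) 1 (1+s0)" using S by simp
    also have "\<dots> = (\<Sum>y\<in>B. g y * y 1 (1+s0))" using finB by (simp add: sum_fun_apply2 mscale_def)
    also have "\<dots> = g x * x 1 (1+s0) + (\<Sum>y\<in>B-{x}. g y * y 1 (1+s0))"
      using finB xB by (simp add: sum.remove)
    also have "(\<Sum>y\<in>B-{x}. g y * y 1 (1+s0)) = 0"
    proof (rule sum.neutral, rule ballI)
      fix y assume "y \<in> B - {x}"
      then obtain s where "y = Eb s" "s \<noteq> s0" unfolding B_def using xe by auto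
      then show "g y * y 1 (1+s0) = 0" using val0 by simp
    qed
    finally have "g x * x 1 (1+s0) = 0" by simp
    then show "g x = 0" using val[OF s0] xe by simp
  qed
  have "card B = vs.dim (Lie n d)" by (rule vs.basis_card_eq_dim[OF BV VB indep])
  then show "vector_space.dim mscale (Lie n d :: (nat \<Rightarrow> nat \<Rightarrow> 'a) set) = n - 1"
    using cardB by simp
qed


end
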